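(* Let $(x_k)_{k\ge0}$ be indeterminates, define $a_n=x_n$ if $n=2^k-1$ for some integer $k\ge0$ and $a_n=0$ otherwise, let $D(n)=\det\left(a_{i+j+1}\right)_{i,j=0}^{n-1}$ with $D(0)=1$, and let $T_n=\frac{D(n)D(n+2)}{D(n+1)^2}$ (in the field of rational functions). Then for all integers $k\ge1$, $n\ge0$ and $j\in\{0,1\}$, $$T_{2^{k+1}n+2^k-2+j}=(-1)^nT_{2^k-2+j}.$$
   Context: Each $D(n)$ is a nonzero polynomial, so $T_n$ is well defined. *)

theory Defs
  imports "HOL-Library.Poly_Mapping" "HOL-Computational_Algebra.Fraction_Field"
    "Jordan_Normal_Form.Determinant"
begin

text \<open>Polynomials over Q in the indeterminates x_0, x_1, ...: a monomial is a
finitely supported exponent vector nat =>0 nat, a polynomial a finitely supported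
coefficient map on monomials. This ring is an integral domain; its fraction field
is the field of rational functions Q(x_0, x_1, ...).\<close>

type_synonym mpoly = "(nat \<Rightarrow>\<^sub>0 nat) \<Rightarrow>\<^sub>0 rat"

definition xvar :: "nat \<Rightarrow> mpoly" where
  "xvar k = Poly_Mapping.single (Poly_Mapping.single k 1) 1"

definition aseq :: "nat \<Rightarrow> mpoly" where
  "aseq n = (if \<exists>k::nat. n = 2 ^ k - 1 then xvar n else 0)"

definition Dh :: "nat \<Rightarrow> mpoly" where
  "Dh n = (if n = 0 then 1 else det (mat n n (\<lambda>(i, j). aseq (i + j + 1))))"

definition Tn :: "nat \<Rightarrow> mpoly fract" where
  "Tn n = Fract (Dh n) 1 * Fract (Dh (n + 2)) 1 / (Fract (Dh (n + 1)) 1) ^ 2"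

end

theory Submission
  imports Defs
begin

definition dS :: "nat set \<Rightarrow> (nat \<Rightarrow> nat \<Rightarrow> 'a::comm_ring_1) \<Rightarrow> 'a" where
  "dS S f = (\<Sum>p\<in>{p. p permutes S}. of_int (sign p) * (\<Prod>i\<in>S. f i (p i)))"

lemma dS_single:
  fixes f :: "nat \<Rightarrow> nat \<Rightarrow> 'a::comm_ring_1"
  assumes fin: "finite S" and c: "c \<in> S" and row: "\<And>j. j \<in> S \<Longrightarrow> j \<noteq> c \<Longrightarrow> f c j = 0"
  shows "dS S f = f c c * dS (S - {c}) f"
proof -
  let ?t = "\<lambda>p. of_int (sign p) * (\<Prod>i\<in>S. f i (p i)) :: 'a"
  have "dS S f = (\<Sum>p\<in>{p. p permutes S \<and> p c = c}. ?t p)"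
    unfolding dS_def
  proof -
    have "\<forall>p\<in>{p. p permutes S} - {p. p permutes S \<and> p c = c}. ?t p = 0"
    proof
      fix p assume "p \<in> {p. p permutes S} - {p. p permutes S \<and> p c = c}"
      then have p: "p permutes S" "p c \<noteq> c" by auto
      have "p c \<in> S" using p c by (simp add: permutes_in_image)
      then have "f c (p c) = 0" using row p by auto
      then have "(\<Prod>i\<in>S. f i (p i)) = 0" using fin c by (meson prod_zero)
      then show "?t p = 0" by simp
    qed
    then show "(\<Sum>p\<in>{p. p permutes S}. ?t p) = (\<Sum>p\<in>{p. p permutes S \<and> p c = c}. ?t p)"
      using fin by (intro sum.mono_neutral_right) (auto simp: finite_permutations)
  qed
  also have "\<dots> = (\<Sum>p\<in>{p. p permutes (S - {c})}. ?t p)"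
  proof (rule sum.cong)
    show "{p. p permutes S \<and> p c = c} = {p. p permutes (S - {c})}"
    proof safe
      fix p assume h: "p permutes S" "p c = c"
      show "p permutes (S - {c})"
      proof (rule permutes_superset[OF h(1)])
        fix x assume "x \<in> S - (S - {c})"
        then have "x = c" by blast
        then show "p x = x" using h(2) by simp
      qed
    next
      fix p assume "p permutes (S - {c})" then show "p permutes S"
        by (meson Diff_subset permutes_subset)
    next
      fix p assume "p permutes (S - {c})" then show "p c = c"
        by (simp add: permutes_not_in)
    qed
  qed simp
  also have "\<dots> = (\<Sum>p\<in>{p. p permutes (S - {c})}. f c c * (of_int (sign p) * (\<Prod>i\<in>S-{c}. f i (p i))))"
  proof (rule sum.cong)
    fix p assume "p \<in> {p. p permutes (S - {c})}"
    then have "p c = c" by (simp add: permutes_not_in)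
    then show "?t p = f c c * (of_int (sign p) * (\<Prod>i\<in>S-{c}. f i (p i)))"
      using fin c by (simp add: prod.remove mult_ac)
  qed simp
  finally show ?thesis unfolding dS_def by (simp add: sum_distrib_left)
qed

lemma dS_pair:
  fixes f :: "nat \<Rightarrow> nat \<Rightarrow> 'a::comm_ring_1"
  assumes fin: "finite S" and u: "u \<in> S" and v: "v \<in> S" and uv: "u \<noteq> v"
    and row: "\<And>j. j \<in> S \<Longrightarrow> j \<noteq> v \<Longrightarrow> f u j = 0"
    and col: "\<And>i. i \<in> S \<Longrightarrow> i \<noteq> v \<Longrightarrow> f i u = 0"
  shows "dS S f = - (f u v * f v u) * dS (S - {u, v}) f"
proof -
  let ?t = "\<lambda>p. of_int (sign p) * (\<Prod>i\<in>S. f i (p i)) :: 'a"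
  let ?S' = "S - {u, v}"
  let ?w = "Transposition.transpose u v"
  have "dS S f = (\<Sum>p\<in>{p. p permutes S \<and> p u = v \<and> p v = u}. ?t p)"
    unfolding dS_def
  proof -
    have "\<forall>p\<in>{p. p permutes S} - {p. p permutes S \<and> p u = v \<and> p v = u}. ?t p = 0"
    proof
      fix p assume "p \<in> {p. p permutes S} - {p. p permutes S \<and> p u = v \<and> p v = u}"
      then have p: "p permutes S" "p u \<noteq> v \<or> p v \<noteq> u" by auto
      have "\<exists>i\<in>S. f i (p i) = 0"
      proof (cases "p u = v")
        case False
        have "p u \<in> S" using p u by (simp add: permutes_in_image)
        then show ?thesis using row False u by auto
      next
        case True
        then have pv: "p v \<noteq> u" using p by auto
        define w where "w = Hilbert_Choice.inv p u"
        have pw: "p w = u" unfolding w_def using p(1) by (meson permutes_inverses(1))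
        have wS: "w \<in> S" unfolding w_def using p(1) u by (simp add: permutes_in_image permutes_inv)
        have "w \<noteq> v" using pw pv by auto
        then show ?thesis using col wS pw by auto
      qed
      then have "(\<Prod>i\<in>S. f i (p i)) = 0" using fin by (meson prod_zero)
      then show "?t p = 0" by simp
    qed
    then show "(\<Sum>p\<in>{p. p permutes S}. ?t p) = (\<Sum>p\<in>{p. p permutes S \<and> p u = v \<and> p v = u}. ?t p)"
      using fin by (intro sum.mono_neutral_right) (auto simp: finite_permutations)
  qed
  also have "\<dots> = (\<Sum>q\<in>{q. q permutes ?S'}. ?t (?w \<circ> q))"
  proof (rule sum.reindex_bij_witness[of _ "\<lambda>q. ?w \<circ> q" "\<lambda>p. ?w \<circ> p"])
    fix q assume "q \<in> {q. q permutes ?S'}"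
    then have q: "q permutes ?S'" by simp
    have qu: "q u = u" and qv: "q v = v" using q by (auto simp: permutes_not_in)
    show "?w \<circ> (?w \<circ> q) = q" by (simp flip: comp_assoc)
    have "q permutes S" using q by (meson Diff_subset permutes_subset)
    then have "?w \<circ> q permutes S" using u v by (simp add: permutes_compose permutes_swap_id)
    then show "?w \<circ> q \<in> {p. p permutes S \<and> p u = v \<and> p v = u}"
      using qu qv by simp
  next
    fix p assume "p \<in> {p. p permutes S \<and> p u = v \<and> p v = u}"
    then have p: "p permutes S" "p u = v" "p v = u" by auto
    show "?w \<circ> (?w \<circ> p) = p" by (simp flip: comp_assoc)
    have pS: "?w \<circ> p permutes S" using p u v by (simp add: permutes_compose permutes_swap_id)
    have fx: "(?w \<circ> p) u = u" "(?w \<circ> p) v = v" using p by auto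
    have "?w \<circ> p permutes ?S'"
    proof (rule permutes_superset[OF pS])
      fix x assume "x \<in> S - ?S'"
      then have "x = u \<or> x = v" by blast
      then show "(?w \<circ> p) x = x" using fx by blast
    qed
    then show "?w \<circ> p \<in> {q. q permutes ?S'}" by simp
  qed (simp flip: comp_assoc)
  also have "\<dots> = (\<Sum>q\<in>{q. q permutes ?S'}. - (f u v * f v u) * (of_int (sign q) * (\<Prod>i\<in>?S'. f i (q i))))"
  proof (rule sum.cong)
    fix q assume "q \<in> {q. q permutes ?S'}"
    then have q: "q permutes ?S'" by simp
    have qu: "q u = u" and qv: "q v = v" using q by (auto simp: permutes_not_in)
    have "permutation q" using q fin by (meson finite_Diff permutation_permutes)
    then have sg: "sign (?w \<circ> q) = - sign q"
      using uv by (simp add: sign_compose sign_swap_id permutation_swap_id)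
    have inS: "q i \<in> ?S'" if "i \<in> ?S'" for i using that permutes_in_image[OF q, of i] by blast
    have pr: "(\<Prod>i\<in>?S'. f i ((?w \<circ> q) i)) = (\<Prod>i\<in>?S'. f i (q i))"
    proof (rule prod.cong)
      fix i assume "i \<in> ?S'"
      then have "q i \<in> ?S'" by (rule inS)
      then show "f i ((?w \<circ> q) i) = f i (q i)" by (auto simp: transpose_def)
    qed simp
    have e1: "(\<Prod>i\<in>S. f i ((?w \<circ> q) i)) = f u ((?w \<circ> q) u) * (\<Prod>i\<in>S - {u}. f i ((?w \<circ> q) i))"
      by (rule prod.remove[OF fin u])
    have vS: "v \<in> S - {u}" using v uv by simp
    have e2: "(\<Prod>i\<in>S - {u}. f i ((?w \<circ> q) i)) = f v ((?w \<circ> q) v) * (\<Prod>i\<in>S - {u} - {v}. f i ((?w \<circ> q) i))"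
      using fin by (intro prod.remove[OF _ vS]) simp
    have e3: "S - {u} - {v} = ?S'" by auto
    have "(\<Prod>i\<in>S. f i ((?w \<circ> q) i)) = f u v * f v u * (\<Prod>i\<in>?S'. f i ((?w \<circ> q) i))"
      unfolding e1 e2 e3 using qu qv by simp
    then show "?t (?w \<circ> q) = - (f u v * f v u) * (of_int (sign q) * (\<Prod>i\<in>?S'. f i (q i)))"
      using sg pr by simp
  qed simp
  finally show ?thesis unfolding dS_def by (simp add: sum_distrib_left)
qed


lemma dS_empty: "dS {} g = 1"
  unfolding dS_def by (simp add: permutes_empty)

definition gH :: "nat \<Rightarrow> nat \<Rightarrow> mpoly" where "gH i j = aseq (i + j + 1)"

lemma Dh_dS: "Dh n = dS {0..<n} gH"
proof (cases "n = 0")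
  case True then show ?thesis by (simp add: Dh_def dS_empty)
next
  case False
  have "det (mat n n (\<lambda>(i,j). aseq (i + j + 1))) = dS {0..<n} gH"
    unfolding det_def dS_def gH_def
    by (auto intro!: sum.cong prod.cong simp: permutes_in_image)
  then show ?thesis using False by (simp add: Dh_def)
qed

lemma no_pow_between:
  fixes N r :: nat
  assumes "2 ^ r < N" "N < 2 ^ (Suc r)"
  shows "\<not> (\<exists>k. N = 2 ^ k)"
proof
  assume "\<exists>k. N = 2 ^ k"
  then obtain k where k: "N = 2 ^ k" by blast
  have "r < k" using assms(1) k by (metis power_strict_increasing_iff one_less_numeral_iff semiring_norm(76))
  moreover have "k < Suc r" using assms(2) k by (metis power_strict_increasing_iff one_less_numeral_iff semiring_norm(76))
  ultimately show False by simp
qed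

lemma aseq_zero:
  assumes "2 ^ r < N + 1" "N + 1 < 2 ^ (Suc r)"
  shows "aseq N = 0"
proof -
  have "\<not> (\<exists>k::nat. N = 2 ^ k - 1)"
  proof
    assume "\<exists>k::nat. N = 2 ^ k - 1"
    then obtain k :: nat where "N = 2 ^ k - 1" by blast
    then have "N + 1 = 2 ^ k" by simp
    then show False using no_pow_between[OF assms] by blast
  qed
  then show ?thesis by (simp add: aseq_def)
qed

lemma aseq_pow: "aseq (2 ^ r - 1) = xvar (2 ^ r - 1)"
  by (auto simp: aseq_def)


lemma gH_sym: "gH i j = gH j i"
  unfolding gH_def by (simp add: add.commute)

lemma iter_step:
  fixes r n t :: nat
  defines "P \<equiv> 2 ^ Suc r" and "H \<equiv> 2 ^ r"
  assumes Hn: "H \<le> n" and nP: "n < P" and t: "t \<le> n - H"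
  shows "dS {0..<n} gH = (-1) ^ t * xvar (P - 1) ^ (2 * t) * dS ({0..<P - 1 - n} \<union> {P - 1 - n + t..<n - t}) gH"
  using t
proof (induction t)
  case 0
  have "{0..<P - 1 - n} \<union> {P - 1 - n + 0..<n - 0} = {0..<n}" using Hn nP unfolding P_def H_def by auto
  then show ?case by simp
next
  case (Suc t)
  let ?m = "P - 1 - n"
  let ?S = "{0..<?m} \<union> {?m + t..<n - t}"
  let ?u = "n - 1 - t" and ?v = "?m + t"
  have PH: "P = 2 * H" unfolding P_def H_def by simp
  have t1: "t + 1 \<le> n - H" using Suc.prems by simp
  have uS: "?u \<in> ?S" using t1 PH nP by auto
  have vS: "?v \<in> ?S" using t1 PH nP by auto
  have uv: "?u \<noteq> ?v" using t1 PH nP by auto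
  have row: "gH ?u j = 0" if j: "j \<in> ?S" "j \<noteq> ?v" for j
  proof (cases "j < ?m")
    case True
    have "2 ^ r < (?u + j + 1) + 1" "(?u + j + 1) + 1 < 2 ^ Suc r"
      using True t1 PH nP unfolding H_def[symmetric] P_def[symmetric] by auto
    then show ?thesis unfolding gH_def by (rule aseq_zero)
  next
    case False
    then have "?m + t < j" "j < n - t" using j by auto
    moreover have P4: "(2::nat) ^ Suc (Suc r) = 4 * H" unfolding H_def by simp
    ultimately have "2 ^ Suc r < (?u + j + 1) + 1" "(?u + j + 1) + 1 < 2 ^ Suc (Suc r)"
      using t1 PH nP unfolding P_def[symmetric] P4 by auto
    then show ?thesis unfolding gH_def by (rule aseq_zero)
  qed
  have col: "gH i ?u = 0" if "i \<in> ?S" "i \<noteq> ?v" for i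
    using row[OF that] by (simp add: gH_sym)
  have guv: "gH ?u ?v = xvar (P - 1)" "gH ?v ?u = xvar (P - 1)"
  proof -
    have "?u + ?v + 1 = 2 ^ Suc r - 1" using t1 PH nP unfolding P_def[symmetric] by auto
    then show "gH ?u ?v = xvar (P - 1)" unfolding gH_def P_def by (simp only: aseq_pow)
    then show "gH ?v ?u = xvar (P - 1)" by (simp add: gH_sym)
  qed
  have Seq: "?S - {?u, ?v} = {0..<?m} \<union> {?m + Suc t..<n - Suc t}" using t1 PH nP by auto
  have "dS ?S gH = - (xvar (P - 1) * xvar (P - 1)) * dS ({0..<?m} \<union> {?m + Suc t..<n - Suc t}) gH"
    using dS_pair[of ?S ?u ?v gH, OF _ uS vS uv row col] guv Seq by simp
  with Suc.IH[OF Suc_leD[OF Suc.prems]] show ?case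
    by (simp add: power2_eq_square power_add mult_ac)
qed


lemma Dh_rec:
  fixes r n :: nat
  defines "P \<equiv> 2 ^ Suc r" and "H \<equiv> 2 ^ r"
  assumes Hn: "H \<le> n" and nP: "n < P"
  shows "Dh n = (-1) ^ (n - H) * xvar (P - 1) ^ (2 * (n - H) + 1) * Dh (P - 1 - n)"
proof -
  let ?m = "P - 1 - n"
  have PH: "P = 2 * H" unfolding P_def H_def by simp
  have H1: "1 \<le> H" unfolding H_def by simp
  have "dS {0..<n} gH = (-1) ^ (n - H) * xvar (P - 1) ^ (2 * (n - H)) * dS ({0..<?m} \<union> {?m + (n - H)..<n - (n - H)}) gH"
    using iter_step[of r n "n - H"] Hn nP unfolding P_def H_def by simp
  moreover have Seq: "{0..<?m} \<union> {?m + (n - H)..<n - (n - H)} = insert (H - 1) {0..<?m}"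
    using PH Hn nP H1 by auto
  moreover have "dS (insert (H - 1) {0..<?m}) gH = gH (H - 1) (H - 1) * dS (insert (H - 1) {0..<?m} - {H - 1}) gH"
  proof (rule dS_single)
    fix j assume j: "j \<in> insert (H - 1) {0..<?m}" "j \<noteq> H - 1"
    then have "j < ?m" by auto
    then have "2 ^ r < (H - 1 + j + 1) + 1" "(H - 1 + j + 1) + 1 < 2 ^ Suc r"
      using PH nP Hn H1 unfolding H_def[symmetric] P_def[symmetric] by auto
    then show "gH (H - 1) j = 0" unfolding gH_def by (rule aseq_zero)
  qed auto
  moreover have "insert (H - 1) {0..<?m} - {H - 1} = {0..<?m}" using PH Hn nP H1 by auto
  moreover have "gH (H - 1) (H - 1) = xvar (P - 1)"
  proof -
    have "H - 1 + (H - 1) + 1 = 2 ^ Suc r - 1" using PH H1 unfolding P_def[symmetric] by auto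
    then show ?thesis unfolding gH_def P_def by (simp only: aseq_pow)
  qed
  ultimately show ?thesis unfolding Dh_dS by (simp add: mult_ac)
qed


lemma single1_nz: "Poly_Mapping.single (m::nat \<Rightarrow>\<^sub>0 nat) (1::rat) \<noteq> 0"
proof
  assume h: "Poly_Mapping.single m (1::rat) = 0"
  have "Poly_Mapping.lookup (Poly_Mapping.single m (1::rat)) m = 1" by simp
  then show False unfolding h by simp
qed

lemma xvar_nz: "xvar k \<noteq> 0"
  unfolding xvar_def by (rule single1_nz)

lemma exists_r: "1 \<le> (n::nat) \<Longrightarrow> \<exists>r. 2 ^ r \<le> n \<and> n < 2 ^ Suc r"
proof (induction n)
  case 0 then show ?case by simp
next
  case (Suc n)
  show ?case
  proof (cases "n = 0")
    case True then show ?thesis by (intro exI[of _ 0]) simp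
  next
    case False
    then obtain r where r: "2 ^ r \<le> n" "n < 2 ^ Suc r" using Suc.IH by auto
    show ?thesis
    proof (cases "Suc n < 2 ^ Suc r")
      case True then show ?thesis using r by (intro exI[of _ r]) simp
    next
      case False
      then have "Suc n = 2 ^ Suc r" using r by simp
      then show ?thesis by (intro exI[of _ "Suc r"]) simp
    qed
  qed
qed

lemma Dh_nz: "Dh n \<noteq> 0"
proof (induction n rule: less_induct)
  case (less n)
  show ?case
  proof (cases "n = 0")
    case True then show ?thesis by (simp add: Dh_def)
  next
    case False
    then obtain r where r: "2 ^ r \<le> n" "n < 2 ^ Suc r" using exists_r[of n] by auto
    have "2 ^ Suc r - 1 - n < n" using r by simp
    then have "Dh (2 ^ Suc r - 1 - n) \<noteq> 0" by (rule less.IH)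
    then show ?thesis using Dh_rec[OF r] xvar_nz by simp
  qed
qed

definition dF :: "nat \<Rightarrow> mpoly fract" where "dF n = Fract (Dh n) 1"

lemma Fmul: "Fract (a * b) 1 = Fract (a::mpoly) 1 * Fract b 1"
  by simp

lemma Fract_pow: "Fract (a ^ k) 1 = (Fract (a::mpoly) 1) ^ k"
proof (induction k)
  case 0 then show ?case by (simp add: One_fract_def)
next
  case (Suc k)
  have "Fract (a ^ Suc k) 1 = Fract a 1 * Fract (a ^ k) 1" by (simp only: power_Suc Fmul)
  then show ?case using Suc.IH by simp
qed

lemma Fract_m1: "Fract (-1 :: mpoly) 1 = -1"
  by (simp add: One_fract_def)

lemma Fract_nz: "(a::mpoly) \<noteq> 0 \<Longrightarrow> Fract a 1 \<noteq> 0"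
  by (simp add: Zero_fract_def eq_fract)

lemma dF_nz: "dF n \<noteq> 0"
  unfolding dF_def using Dh_nz Fract_nz by blast

lemma Tn_dF: "Tn n = dF n * dF (n + 2) / (dF (n + 1)) ^ 2"
  unfolding Tn_def dF_def by simp

lemma dF_rec:
  assumes "2 ^ r \<le> n" "n < 2 ^ Suc r"
  shows "dF n = (-1) ^ (n - 2 ^ r) * (Fract (xvar (2 ^ Suc r - 1)) 1) ^ (2 * (n - 2 ^ r) + 1) * dF (2 ^ Suc r - 1 - n)"
  unfolding dF_def Dh_rec[OF assms] by (simp only: Fmul Fract_pow Fract_m1)


lemma Tn_refl:
  assumes "2 ^ r \<le> N" "N + 2 < 2 ^ Suc r"
  shows "Tn N = Tn (2 ^ Suc r - 3 - N)"
proof -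
  define X where "X = Fract (xvar (2 ^ Suc r - 1)) 1"
  define e where "e = N - 2 ^ r"
  define m where "m = 2 ^ Suc r - 1 - N"
  define y where "y = (-1) ^ e * X ^ (2 * e + 1)"
  have Xnz: "X \<noteq> 0" unfolding X_def using xvar_nz Fract_nz by blast
  have ynz: "y \<noteq> 0" unfolding y_def using Xnz by simp
  have m2: "2 \<le> m" unfolding m_def using assms by simp
  have d0: "dF N = y * dF m"
    using dF_rec[of r N] assms unfolding y_def X_def e_def m_def by simp
  have "dF (N + 1) = (-1) ^ (e + 1) * X ^ (2 * (e + 1) + 1) * dF (m - 1)"
    using dF_rec[of r "N + 1"] assms unfolding X_def e_def m_def
    by (simp add: Suc_diff_le)
  also have "(-1) ^ (e + 1) * X ^ (2 * (e + 1) + 1) = - (y * X ^ 2)"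
  proof -
    have "2 * (e + 1) + 1 = (2 * e + 1) + 2" by simp
    then show ?thesis unfolding y_def by (simp only: power_add) (simp add: algebra_simps)
  qed
  finally have d1: "dF (N + 1) = - (y * X ^ 2) * dF (m - 1)" .
  have "dF (N + 2) = (-1) ^ (e + 2) * X ^ (2 * (e + 2) + 1) * dF (m - 2)"
    using dF_rec[of r "N + 2"] assms unfolding X_def e_def m_def
    by (simp add: Suc_diff_le)
  also have "(-1) ^ (e + 2) * X ^ (2 * (e + 2) + 1) = y * X ^ 4"
  proof -
    have "2 * (e + 2) + 1 = (2 * e + 1) + 4" by simp
    then show ?thesis unfolding y_def by (simp only: power_add) (simp add: algebra_simps)
  qed
  finally have d2: "dF (N + 2) = y * X ^ 4 * dF (m - 2)" .
  have idx: "2 ^ Suc r - 3 - N = m - 2" "m - 2 + 1 = m - 1" "m - 2 + 2 = m"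
    using m2 unfolding m_def by auto
  have Bnz: "dF (m - 1) \<noteq> 0" by (rule dF_nz)
  show ?thesis unfolding Tn_dF idx d0 d1 d2
    using Xnz ynz Bnz by (simp add: field_simps power2_eq_square power4_eq_xxxx)
qed


lemma Tn_key: "Tn (2 ^ Suc r - 1) = - Tn (2 ^ Suc r - 2)"
proof -
  define P :: nat where "P = 2 ^ Suc r"
  define X where "X = Fract (xvar (2 ^ Suc (Suc r) - 1)) 1"
  have P2: "2 \<le> P" unfolding P_def by simp
  have PP: "2 ^ Suc (Suc r) = 2 * P" unfolding P_def by simp
  have Xnz: "X \<noteq> 0" unfolding X_def using xvar_nz Fract_nz by blast
  have dP: "dF P = X * dF (P - 1)"
    using dF_rec[of "Suc r" P] P2 unfolding X_def PP by (simp add: P_def)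
  have dP1: "dF (P + 1) = - (X ^ 3 * dF (P - 2))"
  proof -
    have "(1::nat) \<le> 2 ^ r" by simp
    then have h: "Suc 0 < 2 * 2 ^ r" by linarith
    show ?thesis using dF_rec[of "Suc r" "P + 1"] P2 unfolding X_def PP by (simp add: P_def h)
  qed
  have idx: "P - 2 + 1 = P - 1" "P - 2 + 2 = P" "P - 1 + 1 = P" "P - 1 + 2 = P + 1"
    using P2 by auto
  have n1: "dF (P - 1) \<noteq> 0" by (rule dF_nz)
  show ?thesis unfolding P_def[symmetric] Tn_dF idx dP dP1
    using Xnz n1 by (simp add: field_simps power2_eq_square power3_eq_cube)
qed


lemma Tn_key2:
  assumes "1 \<le> k" "j \<le> (1::nat)"
  shows "Tn (2 ^ k - 2 + (1 - j)) = - Tn (2 ^ k - 2 + j)"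
proof -
  have k: "2 ^ k = (2::nat) ^ Suc (k - 1)" using assms(1) by simp
  have A2: "(2::nat) \<le> 2 ^ k" using assms(1)
    by (metis k Suc_1 Suc_le_mono le_add1 power_Suc power_increasing one_le_numeral power_one_right)
  have K: "Tn (2 ^ k - 1) = - Tn (2 ^ k - 2)" unfolding k by (rule Tn_key)
  have e: "2 ^ k - 2 + 1 = (2::nat) ^ k - 1" using A2 by simp
  from assms(2) have "j = 0 \<or> j = 1" by auto
  then show ?thesis
  proof
    assume "j = 0" then show ?thesis by (simp only: diff_zero add_0_right e K)
  next
    assume "j = 1" then show ?thesis by (simp only: e K minus_minus) simp
  qed
qed

lemma main_aux:
  assumes k: "1 \<le> k"
  shows "\<forall>j \<le> (1::nat). Tn (2 ^ (k + 1) * n + 2 ^ k - 2 + j) = (-1) ^ n * Tn (2 ^ k - 2 + j)"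
proof (induction n rule: less_induct)
  case (less n)
  show ?case
  proof (cases "n = 0")
    case True then show ?thesis by simp
  next
    case False
    then obtain s where s: "2 ^ s \<le> n" "n < 2 ^ Suc s" using exists_r[of n] by auto
    define A :: nat where "A = 2 ^ k"
    define Q :: nat where "Q = 2 ^ (k + 1)"
    define B :: nat where "B = 2 ^ s"
    define n' where "n' = 2 * B - 1 - n"
    have QA: "Q = 2 * A" unfolding Q_def A_def by simp
    have A2: "2 \<le> A" unfolding A_def using k
      by (metis Suc_1 le_add1 le_add_diff_inverse power_increasing power_one_right one_le_numeral)
    have Bn: "B \<le> n" "n < 2 * B" using s unfolding B_def by auto
    have n'n: "n' < n" unfolding n'_def using Bn by linarith
    have n'eq: "n' + 1 + n = 2 * B" unfolding n'_def using Bn by linarith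
    have QBn: "Q * B \<le> Q * n" using Bn by simp
    have Qn': "Q * n' + Q + Q * n = 2 * (Q * B)"
    proof -
      have "Q * (n' + 1 + n) = Q * (2 * B)" using n'eq by simp
      then show ?thesis by (simp add: algebra_simps)
    qed
    have r1: "(2::nat) ^ (k + 1 + s) = Q * B" unfolding Q_def B_def by (simp add: power_add)
    have r2: "(2::nat) ^ Suc (k + 1 + s) = 2 * (Q * B)" unfolding Q_def B_def by (simp add: power_add)
    have sgn: "(-1 :: mpoly fract) ^ n' = - ((-1) ^ n)"
    proof -
      have "odd (n' + n)" using n'eq by presburger
      then have "even n \<longleftrightarrow> odd n'" by auto
      then show ?thesis by (cases "even n") auto
    qed
    show ?thesis
    proof (intro allI impI)
      fix j :: nat assume j: "j \<le> 1"
      let ?N = "2 ^ (k + 1) * n + 2 ^ k - 2 + j"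
      have N: "?N = Q * n + A - 2 + j" unfolding Q_def A_def by simp
      have c1: "2 ^ (k + 1 + s) \<le> ?N" unfolding N r1 using QBn A2 by linarith
      have c2: "?N + 2 < 2 ^ Suc (k + 1 + s)" unfolding N r2 using Qn' A2 QA j by linarith
      have idx: "2 ^ Suc (k + 1 + s) - 3 - ?N = 2 ^ (k + 1) * n' + 2 ^ k - 2 + (1 - j)"
        unfolding N r2 Q_def[symmetric] A_def[symmetric] using Qn' A2 QA j by linarith
      have "Tn ?N = Tn (2 ^ (k + 1) * n' + 2 ^ k - 2 + (1 - j))"
        using Tn_refl[OF c1 c2] unfolding idx .
      also have "\<dots> = (-1) ^ n' * Tn (2 ^ k - 2 + (1 - j))"
        using less.IH[OF n'n] by simp
      also have "\<dots> = (-1) ^ n * Tn (2 ^ k - 2 + j)"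
        unfolding sgn Tn_key2[OF k j] by simp
      finally show "Tn ?N = (-1) ^ n * Tn (2 ^ k - 2 + j)" .
    qed
  qed
qed

theorem theorem5p6:
  fixes k n j :: nat
  assumes "k \<ge> 1" and "j \<in> {0, 1}"
  shows "Tn (2 ^ (k + 1) * n + 2 ^ k - 2 + j) = (-1) ^ n * Tn (2 ^ k - 2 + j)"
  using main_aux[OF assms(1), of n] assms(2) by auto

end
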